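(* Let $(H;\langle\cdot,\cdot\rangle)$ be a real inner product space and let $\{e_i\}_{i\in I}$, $\{f_j\}_{j\in J}$ be two finite orthonormal families in $H$. Let $(H_{\mathbb{C}};\langle\cdot,\cdot\rangle_{\mathbb{C}})$ be the complexification of $H$. Then for any $w\in H_{\mathbb{C}}$, setting $$T(w):=\sum_{i\in I}\langle w,e_i\rangle_{\mathbb{C}}^2+\sum_{j\in J}\langle w,f_j\rangle_{\mathbb{C}}^2-2\sum_{i\in I,\,j\in J}\langle w,e_i\rangle_{\mathbb{C}}\langle w,f_j\rangle_{\mathbb{C}}\langle e_i,f_j\rangle,$$ we have $$|T(w)|\le\frac12|\langle w,\bar w\rangle_{\mathbb{C}}|+\left|T(w)-\frac12\langle w,\bar w\rangle_{\mathbb{C}}\right|\le\frac12\Big[\|w\|_{\mathbb{C}}^2+|\langle w,\bar w\rangle_{\mathbb{C}}|\Big]\le\|w\|_{\mathbb{C}}^2.$$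
   Context: The complexification $H_{\mathbb{C}}$ of a real inner product space $H$ is the set $H\times H$ of pairs $(x,y)$ (written $x+iy$) with $(x,y)+(x',y')=(x+x',y+y')$ and $(\sigma+i\tau)(x,y)=(\sigma x-\tau y,\tau x+\sigma y)$ for $\sigma,\tau\in\mathbb{R}$, and with inner product $\langle (x,y),(x',y')\rangle_{\mathbb{C}}=\langle x,x'\rangle+\langle y,y'\rangle+i[\langle x',y\rangle-\langle x,y'\rangle]$, so $\|(x,y)\|_{\mathbb{C}}^2=\|x\|^2+\|y\|^2$. The conjugate of $w=(x,y)$ is $\bar w=(x,-y)$. A vector $e\in H$ is identified with $(e,0)\in H_{\mathbb{C}}$, so $\langle w,e_i\rangle_{\mathbb{C}}=\langle w,(e_i,0)\rangle_{\mathbb{C}}$; $\langle e_i,f_j\rangle$ is the real inner product in $H$. A family $\{e_i\}$ is orthonormal if $\langle e_i,e_j\rangle=\delta_{ij}$. *)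

theory Defs
  imports "HOL-Analysis.Analysis"
begin

text \<open>Complexification of a real inner product space 'a: pairs (x,y) standing for x + i y.\<close>

definition cx_inner :: "('a::real_inner \<times> 'a) \<Rightarrow> ('a \<times> 'a) \<Rightarrow> complex" where
  "cx_inner w w' = Complex (inner (fst w) (fst w') + inner (snd w) (snd w'))
                           (inner (fst w') (snd w) - inner (fst w) (snd w'))"

definition cx_norm_sq :: "('a::real_inner \<times> 'a) \<Rightarrow> real" where
  "cx_norm_sq w = (norm (fst w))\<^sup>2 + (norm (snd w))\<^sup>2"

definition cx_conj :: "('a::real_inner \<times> 'a) \<Rightarrow> ('a \<times> 'a)" where
  "cx_conj w = (fst w, - snd w)"

definition cx_embed :: "'a::real_inner \<Rightarrow> ('a \<times> 'a)" where
  "cx_embed e = (e, 0)"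

definition orthonormal_family :: "'i set \<Rightarrow> ('i \<Rightarrow> 'a::real_inner) \<Rightarrow> bool" where
  "orthonormal_family I e \<longleftrightarrow> (\<forall>i\<in>I. \<forall>j\<in>I. inner (e i) (e j) = (if i = j then 1 else 0))"

definition T_fun :: "'i set \<Rightarrow> 'j set \<Rightarrow> ('i \<Rightarrow> 'a::real_inner) \<Rightarrow> ('j \<Rightarrow> 'a) \<Rightarrow> ('a \<times> 'a) \<Rightarrow> complex" where
  "T_fun I J e f w =
     (\<Sum>i\<in>I. (cx_inner w (cx_embed (e i)))\<^sup>2)
   + (\<Sum>j\<in>J. (cx_inner w (cx_embed (f j)))\<^sup>2)
   - 2 * (\<Sum>i\<in>I. \<Sum>j\<in>J. cx_inner w (cx_embed (e i)) * cx_inner w (cx_embed (f j))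
                              * complex_of_real (inner (e i) (f j)))"

end

theory Submission
  imports Defs
begin

definition proj :: "'i set \<Rightarrow> ('i \<Rightarrow> 'a::real_inner) \<Rightarrow> 'a \<Rightarrow> 'a" where
  "proj I e u = (\<Sum>i\<in>I. inner u (e i) *\<^sub>R e i)"

lemma proj_inner: "inner (proj I e u) v = (\<Sum>i\<in>I. inner u (e i) * inner (e i) v)"
  by (simp add: proj_def inner_sum_left)

lemma proj_inner_e:
  assumes "finite I" "orthonormal_family I e" "k \<in> I"
  shows "inner (proj I e v) (e k) = inner v (e k)"
proof -
  have "inner (proj I e v) (e k) = (\<Sum>i\<in>I. inner v (e i) * (if i = k then 1 else 0))"
    unfolding proj_inner using assms(2,3) unfolding orthonormal_family_def
    by (intro sum.cong) auto
  also have "\<dots> = inner v (e k)" using assms by (simp add: if_distrib sum.delta cong: if_cong)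
  finally show ?thesis .
qed

lemma proj_inner_proj:
  assumes "finite I" "orthonormal_family I e"
  shows "inner (proj I e u) (proj I e v) = inner (proj I e u) v"
proof -
  have "inner (proj I e u) (proj I e v) = (\<Sum>i\<in>I. inner u (e i) * inner (e i) (proj I e v))"
    by (simp add: proj_inner)
  also have "\<dots> = (\<Sum>i\<in>I. inner u (e i) * inner (e i) v)"
    using proj_inner_e[OF assms] by (intro sum.cong) (auto simp: inner_commute)
  finally show ?thesis by (simp add: proj_inner)
qed

lemma proj_sym: "inner (proj I e u) v = inner u (proj I e v)"
  by (simp add: proj_inner inner_commute proj_def inner_sum_right mult.commute)

lemma proj_lin: "proj I e (a *\<^sub>R u + b *\<^sub>R v) = a *\<^sub>R proj I e u + b *\<^sub>R proj I e v"
  by (simp add: proj_def inner_add_left scaleR_add_left sum.distrib scaleR_sum_right)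

lemma proj_diff: "proj I e (u - v) = proj I e u - proj I e v"
  by (simp add: proj_def inner_diff_left scaleR_diff_left sum_subtractf)

lemma proj_orth:
  assumes "finite I" "orthonormal_family I e"
  shows "inner (proj I e u) (v - proj I e v) = 0"
  using proj_inner_proj[OF assms] by (simp add: inner_diff_right)

lemma proj_contr:
  assumes "finite I" "orthonormal_family I e"
  shows "inner (v - proj I e v) (v - proj I e v) \<le> inner v v"
    and "inner (proj I e v) (proj I e v) \<le> inner v v"
proof -
  have a: "inner (proj I e v) (proj I e v) = inner (proj I e v) v" by (rule proj_inner_proj[OF assms])
  have b: "inner (v - proj I e v) (v - proj I e v) = inner v v - inner (proj I e v) (proj I e v)"
    using a by (simp add: inner_diff_left inner_diff_right inner_commute)
  have c: "0 \<le> inner (v - proj I e v) (v - proj I e v)" by simp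
  show "inner (v - proj I e v) (v - proj I e v) \<le> inner v v" using b by simp
  show "inner (proj I e v) (proj I e v) \<le> inner v v" using b c by simp
qed

lemma D_contr:
  fixes e :: "'i \<Rightarrow> 'a::real_inner" and f :: "'j \<Rightarrow> 'a"
  assumes "finite I" "finite J" "orthonormal_family I e" "orthonormal_family J f"
  shows "inner (proj I e u - proj J f u) (proj I e u - proj J f u) \<le> inner u u"
proof -
  let ?P = "proj I e" and ?Q = "proj J f"
  define A where "A = ?P (u - ?Q u)"
  define B where "B = ?Q u - ?P (?Q u)"
  have eq: "?P u - ?Q u = A - B" by (simp add: A_def B_def proj_diff)
  have ab: "inner A B = 0" unfolding A_def B_def by (rule proj_orth[OF assms(1,3)])
  have "inner (A - B) (A - B) = inner A A + inner B B"
    using ab by (simp add: inner_diff_left inner_diff_right inner_commute)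
  also have "\<dots> \<le> inner (u - ?Q u) (u - ?Q u) + inner (?Q u) (?Q u)"
    unfolding A_def B_def using proj_contr[OF assms(1,3)] by (intro add_mono) auto
  also have "\<dots> = inner u u"
    using proj_orth[OF assms(2,4), of u u]
    by (simp add: inner_diff_left inner_diff_right inner_commute)
  finally show ?thesis using eq by simp
qed


lemma key_real:
  fixes uu uv ww xx xy yy :: real
  assumes up: "\<And>a b. a^2*uu + 2*a*b*uv + b^2* ww \<le> a^2*xx + 2*a*b*xy + b^2*yy"
    and lo: "\<And>a b. 0 \<le> a^2*uu + 2*a*b*uv + b^2* ww"
  shows "cmod (Complex (uu - ww - (xx - yy)/2) (2*uv - xy)) \<le> (xx + yy)/2"
proof -
  define p where "p = uu - ww - (xx - yy)/2"
  define q where "q = 2*uv - xy"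
  define z where "z = Complex p q"
  define r where "r = cmod z"
  obtain c where zz: "c ^ 2 = z" using power2_csqrt by blast
  define a where "a = Re c"
  define b where "b = Im c"
  have pa: "a^2 - b^2 = p" and qa: "2*a*b = q"
    using arg_cong[OF zz, of Re] arg_cong[OF zz, of Im]
    by (simp_all add: a_def b_def z_def power2_eq_square mult.commute mult.left_commute del: Re_power2 Im_power2)
  have ra: "a^2 + b^2 = r"
  proof -
    have "cmod c ^ 2 = cmod (c ^ 2)" by (simp add: norm_power)
    then show ?thesis using zz by (simp add: r_def a_def b_def cmod_power2)
  qed
  have r2: "r^2 = p^2 + q^2" by (simp add: r_def z_def cmod_power2)
  have r0: "r \<ge> 0" by (simp add: r_def)
  let ?h = "\<lambda>a b. a^2*uu + 2*a*b*uv + b^2* ww - (a^2*xx + 2*a*b*xy + b^2*yy)/2"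
  let ?g = "\<lambda>a b. (a^2*xx + 2*a*b*xy + b^2*yy)/2"
  have aux1: "\<And>X Y::real. X \<le> Y \<Longrightarrow> X - Y/2 \<le> Y/2" by simp
  have aux2: "\<And>X Y::real. 0 \<le> X \<Longrightarrow> - (Y/2) \<le> X - Y/2" by simp
  have h1: "?h a b \<le> ?g a b" by (rule aux1[OF up[of a b]])
  have h2: "- ?g (-b) a \<le> ?h (-b) a" by (rule aux2[OF lo[of "-b" a]])
  have "?h a b - ?h (-b) a = (a^2-b^2)*p + 2*a*b*q"
    by (simp add: p_def q_def power2_eq_square field_simps)
  also have "\<dots> = r^2" using pa qa r2 by (simp add: power2_eq_square)
  finally have "r^2 \<le> ?g a b + ?g (-b) a" using h1 h2 by linarith
  also have "?g a b + ?g (-b) a = (a^2+b^2)*(xx+yy)/2" by (simp add: power2_eq_square field_simps)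
  finally have "r * r \<le> r * ((xx+yy)/2)" using ra by (simp add: power2_eq_square)
  moreover have "0 \<le> xx" "0 \<le> yy" using up[of 1 0] lo[of 1 0] up[of 0 1] lo[of 0 1] by simp_all
  ultimately have "r \<le> (xx+yy)/2" using r0
    by (cases "r = 0") (auto simp: mult_le_cancel_left_pos)
  then show ?thesis by (simp add: r_def z_def p_def q_def)
qed


lemma proj_proj_cross:
  "inner (proj I e u) (proj J f v) = (\<Sum>i\<in>I. \<Sum>j\<in>J. inner u (e i) * inner v (f j) * inner (e i) (f j))"
  apply (simp add: proj_def inner_sum_left inner_sum_right sum_distrib_left mult.assoc mult.left_commute)
  by (rule sum.swap)

lemma proj_proj_same:
  assumes "finite I" "orthonormal_family I e"
  shows "inner (proj I e u) (proj I e v) = (\<Sum>i\<in>I. inner u (e i) * inner v (e i))"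
proof -
  have "inner (proj I e u) (proj I e v) = (\<Sum>i\<in>I. inner u (e i) * inner (proj I e v) (e i))"
    by (simp add: proj_inner inner_commute)
  also have "\<dots> = (\<Sum>i\<in>I. inner u (e i) * inner v (e i))"
    using proj_inner_e[OF assms] by (intro sum.cong) auto
  finally show ?thesis .
qed

lemma cx_e: "cx_inner w (cx_embed e) = Complex (inner (fst w) e) (inner (snd w) e)"
  by (simp add: cx_inner_def cx_embed_def inner_commute)

lemma T_formula:
  fixes e :: "'i \<Rightarrow> 'a::real_inner" and f :: "'j \<Rightarrow> 'a"
  assumes "finite I" "finite J" "orthonormal_family I e" "orthonormal_family J f"
  defines "D \<equiv> \<lambda>u. proj I e u - proj J f u"
  shows "T_fun I J e f w = Complex (inner (D (fst w)) (D (fst w)) - inner (D (snd w)) (D (snd w)))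
                                  (2 * inner (D (fst w)) (D (snd w)))"
proof -
  obtain x y where w: "w = (x, y)" by fastforce
  have DD: "inner (D u) (D v) = inner (proj I e u) (proj I e v) + inner (proj J f u) (proj J f v)
     - inner (proj I e u) (proj J f v) - inner (proj I e v) (proj J f u)" for u v
    unfolding D_def by (simp add: inner_diff_left inner_diff_right inner_commute)
  show ?thesis
    unfolding T_fun_def w cx_e DD
    apply (simp only: proj_proj_same[OF assms(1,3)] proj_proj_same[OF assms(2,4)])
    apply (simp add: proj_proj_cross complex_eq_iff power2_eq_square sum_subtractf sum.distrib
       sum_distrib_left algebra_simps)
    done
qed


theorem theorem3p1:
  fixes e :: "'i \<Rightarrow> 'a::real_inner" and f :: "'j \<Rightarrow> 'a"
    and I :: "'i set" and J :: "'j set" and w :: "'a \<times> 'a"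
  assumes "finite I" and "finite J"
    and "orthonormal_family I e" and "orthonormal_family J f"
  shows "cmod (T_fun I J e f w)
           \<le> 1/2 * cmod (cx_inner w (cx_conj w)) + cmod (T_fun I J e f w - 1/2 * cx_inner w (cx_conj w))
       \<and> 1/2 * cmod (cx_inner w (cx_conj w)) + cmod (T_fun I J e f w - 1/2 * cx_inner w (cx_conj w))
           \<le> 1/2 * (cx_norm_sq w + cmod (cx_inner w (cx_conj w)))
       \<and> 1/2 * (cx_norm_sq w + cmod (cx_inner w (cx_conj w))) \<le> cx_norm_sq w"
proof -
  define D where "D = (\<lambda>u. proj I e u - proj J f u)"
  obtain x y where w: "w = (x, y)" by fastforce
  define T where "T = T_fun I J e f w"
  define B where "B = cx_inner w (cx_conj w)"
  define N where "N = cx_norm_sq w"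
  have Dlin: "D (a *\<^sub>R x + b *\<^sub>R y) = a *\<^sub>R D x + b *\<^sub>R D y" for a b
    by (simp add: D_def proj_lin algebra_simps)
  have T: "T = Complex (inner (D x) (D x) - inner (D y) (D y)) (2 * inner (D x) (D y))"
    unfolding T_def D_def using T_formula[OF assms, of w] by (simp add: w)
  have B: "B = Complex (inner x x - inner y y) (2 * inner x y)"
    by (simp add: B_def w cx_inner_def cx_conj_def)
  have N: "N = inner x x + inner y y"
    by (simp add: N_def w cx_norm_sq_def power2_norm_eq_inner)
  have quad: "inner (a *\<^sub>R u + b *\<^sub>R v) (a *\<^sub>R u + b *\<^sub>R v)
      = a^2 * inner u u + 2*a*b * inner u v + b^2 * inner v v" for a b :: real and u v :: 'a
    by (simp add: inner_add_left inner_add_right inner_commute power2_eq_square algebra_simps)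
  have up: "a^2 * inner (D x) (D x) + 2*a*b * inner (D x) (D y) + b^2 * inner (D y) (D y)
      \<le> a^2 * inner x x + 2*a*b * inner x y + b^2 * inner y y" for a b
  proof -
    have c: "inner (D z) (D z) \<le> inner z z" for z
      unfolding D_def by (rule D_contr[OF assms])
    show ?thesis using c[of "a *\<^sub>R x + b *\<^sub>R y"] unfolding Dlin quad .
  qed
  have lo: "0 \<le> a^2 * inner (D x) (D x) + 2*a*b * inner (D x) (D y) + b^2 * inner (D y) (D y)" for a b
    using inner_ge_zero[of "a *\<^sub>R D x + b *\<^sub>R D y"] by (simp only: quad)
  have lo2: "0 \<le> a^2 * inner x x + 2*a*b * inner x y + b^2 * inner y y" for a b
    using inner_ge_zero[of "a *\<^sub>R x + b *\<^sub>R y"] by (simp only: quad)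
  have k1: "cmod (T - 1/2 * B) \<le> N / 2"
  proof -
    have "T - 1/2 * B = Complex (inner (D x) (D x) - inner (D y) (D y) - (inner x x - inner y y)/2)
          (2 * inner (D x) (D y) - inner x y)"
      by (simp add: T B complex_eq_iff)
    then show ?thesis using key_real[OF up lo] by (simp add: N)
  qed
  have k2: "cmod B \<le> N"
  proof -
    have "cmod (Complex (0 - 0 - (inner x x - inner y y)/2) (2*0 - inner x y)) \<le> (inner x x + inner y y)/2"
      by (rule key_real) (use lo2 in simp_all)
    moreover have "B = - 2 * Complex (0 - 0 - (inner x x - inner y y)/2) (2*0 - inner x y)"
      by (simp add: B complex_eq_iff)
    ultimately show ?thesis by (simp add: N norm_mult)
  qed
  have tri: "cmod T \<le> 1/2 * cmod B + cmod (T - 1/2 * B)"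
  proof -
    have "cmod T \<le> cmod (1/2 * B) + cmod (T - 1/2 * B)"
      using norm_triangle_ineq[of "1/2 * B" "T - 1/2 * B"] by simp
    then show ?thesis by (simp add: norm_mult)
  qed
  show ?thesis
    using tri k1 k2 unfolding T_def[symmetric] B_def[symmetric] N_def[symmetric] by auto
qed

end
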